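(* There is an absolute constant $c>0$ such that the following holds for all sufficiently large $n$. Let $L_1,\dots,L_n\colon\mathbb{F}_2^m\to\mathbb{F}_2$ be polynomials of degree at most $1$ and let $\mathcal{L}=(L_1,\dots,L_n)$ be the distribution on $\{0,1\}^n$ of $(L_1(X),\dots,L_n(X))$ for $X$ uniform on $\mathbb{F}_2^m$. Then \[ \|\mathcal{L}-\mathrm{Ber}(1/3)^{\otimes n}\|_{\mathtt{TV}}\ \ge\ 1-2^{-cn}. \]
   Context: $\mathrm{Ber}(1/3)^{\otimes n}$ is the product of $n$ independent Bernoulli$(1/3)$ bits. The total variation distance is $\|\mathcal{D}_1-\mathcal{D}_2\|_{\mathtt{TV}}=\frac12\sum_x|\mathcal{D}_1(x)-\mathcal{D}_2(x)|$. *)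

theory Defs
  imports Complex_Main
begin

text \<open>Vectors in F_2^k are boolean lists of length k (True = 1, False = 0).\<close>
definition cube :: "nat \<Rightarrow> bool list set" where
  "cube k = {xs. length xs = k}"

definition deg_le1_F2 :: "nat \<Rightarrow> (bool list \<Rightarrow> bool) \<Rightarrow> bool" where
  "deg_le1_F2 m f \<longleftrightarrow> (\<exists>(a0::bool) (a::nat \<Rightarrow> bool). \<forall>x\<in>cube m.
      f x = odd (of_bool a0 + (\<Sum>i<m. of_bool (a i \<and> x ! i) :: nat)))"

text \<open>Law of (L_0(X),...,L_{n-1}(X)) for X uniform on F_2^m.\<close>
definition lin_dist :: "nat \<Rightarrow> nat \<Rightarrow> (nat \<Rightarrow> bool list \<Rightarrow> bool) \<Rightarrow> bool list \<Rightarrow> real" where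
  "lin_dist n m L y = real (card {x\<in>cube m. map (\<lambda>j. L j x) [0..<n] = y}) / 2 ^ m"

definition ber_prod :: "nat \<Rightarrow> bool list \<Rightarrow> real" where
  "ber_prod n y = (\<Prod>j<n. if y ! j then 1/3 else 2/3)"

definition tv_dist :: "nat \<Rightarrow> (bool list \<Rightarrow> real) \<Rightarrow> (bool list \<Rightarrow> real) \<Rightarrow> real" where
  "tv_dist n D1 D2 = (1/2) * (\<Sum>y\<in>cube n. \<bar>D1 y - D2 y\<bar>)"

end

theory Submission
  imports Defs
begin

definition xr :: "bool list \<Rightarrow> bool list \<Rightarrow> bool list" where
  "xr x u = map2 (\<noteq>) x u"

lemma cube_finite: "finite (cube k)"
  unfolding cube_def using finite_lists_length_eq[of "UNIV::bool set" k] by simp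

lemma card_cube: "card (cube k) = 2^k"
  unfolding cube_def using card_lists_length_eq[of "UNIV::bool set" k] by simp

lemma xr_cube: "x\<in>cube m \<Longrightarrow> u\<in>cube m \<Longrightarrow> xr x u \<in> cube m"
  by (simp add: cube_def xr_def)

lemma xr_nth: "x\<in>cube m \<Longrightarrow> u\<in>cube m \<Longrightarrow> i<m \<Longrightarrow> xr x u ! i = (x!i \<noteq> u!i)"
  by (simp add: cube_def xr_def)

lemma xr_inv: "x\<in>cube m \<Longrightarrow> u\<in>cube m \<Longrightarrow> v\<in>cube m \<Longrightarrow> xr (xr (xr (xr x u) v) u) v = x"
  by (rule nth_equalityI) (auto simp: xr_nth xr_cube cube_def xr_def)

lemma even_sum_xor: "finite A \<Longrightarrow> even (\<Sum>i\<in>A. of_bool (P i \<noteq> Q i) :: nat) =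
   (even (\<Sum>i\<in>A. of_bool (P i)::nat) = even (\<Sum>i\<in>A. of_bool(Q i)::nat))"
  by (induction A rule: finite_induct) (auto simp del: sum_of_bool_eq)

lemma deg_xor3:
  assumes "deg_le1_F2 m f" "x\<in>cube m" "u\<in>cube m" "v\<in>cube m"
  shows "f (xr (xr x u) v) = (f x \<noteq> (f u \<noteq> f v))"
proof -
  obtain a0 a where h: "\<forall>x\<in>cube m. f x = odd (of_bool a0 + (\<Sum>i<m. of_bool (a i \<and> x ! i) :: nat))"
    using assms(1) unfolding deg_le1_F2_def by blast
  have w: "xr (xr x u) v \<in> cube m" using assms by (simp add: xr_cube)
  have "(\<Sum>i<m. of_bool (a i \<and> xr (xr x u) v ! i) :: nat)
     = (\<Sum>i<m. of_bool (((a i \<and> x!i) \<noteq> (a i \<and> u!i)) \<noteq> (a i \<and> v!i)))"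
  proof (rule sum.cong)
    fix i assume "i \<in> {..<m}"
    hence "xr (xr x u) v ! i = ((x!i \<noteq> u!i) \<noteq> v!i)"
      using assms xr_nth[of "xr x u" m v i] xr_nth[of x m u i] xr_cube[of x m u] by auto
    thus "of_bool (a i \<and> xr (xr x u) v ! i) = (of_bool (((a i \<and> x!i) \<noteq> (a i \<and> u!i)) \<noteq> (a i \<and> v!i)) :: nat)"
      by auto
  qed simp
  hence "even (\<Sum>i<m. of_bool (a i \<and> xr (xr x u) v ! i) :: nat) =
     ((even (\<Sum>i<m. of_bool (a i \<and> x!i)::nat) = even (\<Sum>i<m. of_bool (a i \<and> u!i)::nat))
        = even (\<Sum>i<m. of_bool (a i \<and> v!i)::nat))"
    by (simp only: even_sum_xor[OF finite_lessThan, of "\<lambda>i. (a i \<and> x!i) \<noteq> (a i \<and> u!i)" "\<lambda>i. a i \<and> v!i" m]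
         even_sum_xor[OF finite_lessThan, of "\<lambda>i. a i \<and> x!i" "\<lambda>i. a i \<and> u!i" m])
  thus ?thesis using h w assms by auto
qed

lemma map_eq_iff: "map (\<lambda>j. L j x) [0..<k] = y \<longleftrightarrow> length y = k \<and> (\<forall>j<k. L j x = y!j)"
  by (auto simp: list_eq_iff_nth_eq)

lemma fib_closed:
  assumes "\<forall>j<n. deg_le1_F2 m (L j)" "k \<le> n" "x\<in>cube m" "u\<in>cube m" "v\<in>cube m"
    "map (\<lambda>j. L j x) [0..<k] = y" "map (\<lambda>j. L j u) [0..<k] = y" "map (\<lambda>j. L j v) [0..<k] = y"
  shows "map (\<lambda>j. L j (xr (xr x u) v)) [0..<k] = y"
proof -
  have "L j (xr (xr x u) v) = y ! j" if "j < k" for j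
  proof -
    have "L j x = y!j" "L j u = y!j" "L j v = y!j" using assms(6-8) that unfolding map_eq_iff by auto
    moreover have "deg_le1_F2 m (L j)" using assms(1,2) that by auto
    ultimately show ?thesis using deg_xor3[of m "L j" x u v] assms(3-5) by simp
  qed
  moreover have "length y = k" using assms(6) by auto
  ultimately show ?thesis unfolding map_eq_iff by blast
qed

lemma balanced:
  fixes y :: "bool list"
  assumes "\<forall>j<n. deg_le1_F2 m (L j)" "k < n"
  defines "S \<equiv> {x\<in>cube m. map (\<lambda>j. L j x) [0..<k] = y}"
  shows "card {x\<in>S. L k x} = 0 \<or> card {x\<in>S. \<not> L k x} = 0 \<or> card {x\<in>S. L k x} = card {x\<in>S. \<not> L k x}"
proof (cases "\<exists>u\<in>S. \<exists>v\<in>S. L k u \<and> \<not> L k v")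
  case True
  then obtain u v where uv: "u\<in>S" "v\<in>S" "L k u" "\<not> L k v" by blast
  define g where "g x = xr (xr x u) v" for x
  have fin: "finite S" unfolding S_def using cube_finite by simp
  have cl: "g x \<in> S" if "x \<in> S" for x
    using that uv fib_closed[OF assms(1), of k x u v y] assms(2) unfolding S_def g_def
    by (auto simp: xr_cube)
  have Lg: "L k (g x) = (\<not> L k x)" if "x \<in> S" for x
    using that uv deg_xor3[of m "L k" x u v] assms unfolding S_def g_def by auto
  have inj: "inj_on g S"
    by (rule inj_on_inverseI[where g=g]) (use uv in \<open>auto simp: g_def S_def xr_inv\<close>)
  have "card {x\<in>S. L k x} \<le> card {x\<in>S. \<not> L k x}"
    by (rule card_inj_on_le[where f=g]) (use inj cl Lg fin in \<open>auto intro: inj_on_subset\<close>)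
  moreover have "card {x\<in>S. \<not> L k x} \<le> card {x\<in>S. L k x}"
    by (rule card_inj_on_le[where f=g]) (use inj cl Lg fin in \<open>auto intro: inj_on_subset\<close>)
  ultimately show ?thesis by simp
next
  case False
  hence "{x\<in>S. L k x} = {} \<or> {x\<in>S. \<not> L k x} = {}" by blast
  thus ?thesis by (metis card.empty)
qed

definition rr :: real where "rr = sqrt (1/6) + sqrt (1/3)"

lemma loc:
  fixes a b q :: real
  assumes "a\<ge>0" "b\<ge>0" "q\<ge>0" "a=0 \<or> b=0 \<or> a=b"
  shows "sqrt (a*(q*(1/3))) + sqrt (b*(q*(2/3))) \<le> rr * sqrt ((a+b)*q)"
proof -
  have s16: "sqrt (1/6) \<le> sqrt (1/3)" by (rule real_sqrt_le_mono) simp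
  have s23: "sqrt (2/3) = 2 * sqrt (1/6)"
  proof -
    have "sqrt (2/3) = sqrt (4 * (1/6))" by simp
    also have "\<dots> = sqrt 4 * sqrt (1/6)" by (simp only: real_sqrt_mult)
    also have "sqrt 4 = (2::real)" using real_sqrt_abs[of 2] by simp
    finally show ?thesis by simp
  qed
  show ?thesis
  proof (cases "a = 0")
    case True
    have "sqrt (b*(q*(2/3))) = sqrt (b*q) * sqrt (2/3)" by (simp add: real_sqrt_mult[symmetric] mult_ac)
    also have "\<dots> \<le> sqrt (b*q) * rr" by (rule mult_left_mono) (use s16 s23 assms in \<open>auto simp: rr_def\<close>)
    finally show ?thesis using True by (simp add: mult_ac)
  next
    case a: False
    show ?thesis
    proof (cases "b = 0")
      case True
      have "sqrt (a*(q*(1/3))) = sqrt (a*q) * sqrt (1/3)" by (simp add: real_sqrt_mult[symmetric] mult_ac)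
      also have "\<dots> \<le> sqrt (a*q) * rr" by (rule mult_left_mono) (use assms in \<open>auto simp: rr_def\<close>)
      finally show ?thesis using True by (simp add: mult_ac)
    next
      case False
      with a assms have ab: "b = a" by auto
      have e1: "sqrt 2 * sqrt (1/6) = sqrt (1/3)" by (simp add: real_sqrt_mult[symmetric])
      have e2: "sqrt 2 * sqrt (1/3) = sqrt (2/3)" by (simp add: real_sqrt_mult[symmetric])
      have "rr * sqrt ((a+b)*q) = sqrt (a*q) * (sqrt 2 * sqrt (1/6) + sqrt 2 * sqrt (1/3))"
        unfolding rr_def ab by (simp add: real_sqrt_mult[symmetric] algebra_simps)
      also have "\<dots> = sqrt (a*q) * sqrt (1/3) + sqrt (a*q) * sqrt (2/3)" by (simp add: e1 e2 algebra_simps)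
      also have "\<dots> = sqrt (a*(q*(1/3))) + sqrt (b*(q*(2/3)))"
        by (simp add: ab real_sqrt_mult[symmetric] mult_ac)
      finally show ?thesis by simp
    qed
  qed
qed

lemma cube_Suc: "cube (Suc k) = (\<lambda>y. y @ [True]) ` cube k \<union> (\<lambda>y. y @ [False]) ` cube k"
proof
  show "cube (Suc k) \<subseteq> (\<lambda>y. y @ [True]) ` cube k \<union> (\<lambda>y. y @ [False]) ` cube k"
  proof
    fix z assume z: "z \<in> cube (Suc k)"
    hence "z \<noteq> []" by (auto simp: cube_def)
    hence e: "z = butlast z @ [last z]" by simp
    have "butlast z \<in> cube k" using z by (simp add: cube_def)
    thus "z \<in> (\<lambda>y. y @ [True]) ` cube k \<union> (\<lambda>y. y @ [False]) ` cube k"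
      using e by (cases "last z") auto
  qed
qed (auto simp: cube_def)

lemma sum_cube_Suc: "(\<Sum>y\<in>cube (Suc k). f y) = (\<Sum>y\<in>cube k. f (y @ [True]) + f (y @ [False]))"
proof -
  have "(\<Sum>y\<in>cube (Suc k). f y) = (\<Sum>y\<in>(\<lambda>y. y @ [True]) ` cube k. f y) + (\<Sum>y\<in>(\<lambda>y. y @ [False]) ` cube k. f y)"
    unfolding cube_Suc by (rule sum.union_disjoint) (auto simp: cube_finite)
  also have "\<dots> = (\<Sum>y\<in>cube k. f (y @ [True])) + (\<Sum>y\<in>cube k. f (y @ [False]))"
    by (subst (1 2) sum.reindex) (auto simp: inj_on_def)
  finally show ?thesis by (simp add: sum.distrib)
qed

lemma ld_snoc: "length y = k \<Longrightarrow> lin_dist (Suc k) m L (y @ [b]) =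
   real (card {x\<in>cube m. map (\<lambda>j. L j x) [0..<k] = y \<and> L k x = b}) / 2 ^ m"
  unfolding lin_dist_def by simp

lemma card_split: "finite S \<Longrightarrow> card S = card {x\<in>S. P x} + card {x\<in>S. \<not> P x}"
  by (subst card_Un_disjoint[symmetric]) (auto intro: arg_cong[where f=card])

lemma ld_split: "length y = k \<Longrightarrow> lin_dist (Suc k) m L (y @ [True]) + lin_dist (Suc k) m L (y @ [False])
   = lin_dist k m L y"
proof -
  assume y: "length y = k"
  let ?S = "{x\<in>cube m. map (\<lambda>j. L j x) [0..<k] = y}"
  have "card ?S = card {x\<in>?S. L k x} + card {x\<in>?S. \<not> L k x}"
    by (rule card_split) (simp add: cube_finite)
  moreover have "{x\<in>?S. L k x} = {x\<in>cube m. map (\<lambda>j. L j x) [0..<k] = y \<and> L k x = True}" by auto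
  moreover have "{x\<in>?S. \<not> L k x} = {x\<in>cube m. map (\<lambda>j. L j x) [0..<k] = y \<and> L k x = False}" by auto
  ultimately show ?thesis using y unfolding ld_snoc[OF y] by (simp add: lin_dist_def add_divide_distrib)
qed

lemma bp_snoc: "length y = k \<Longrightarrow> ber_prod (Suc k) (y @ [b]) = ber_prod k y * (if b then 1/3 else 2/3)"
proof -
  assume y: "length y = k"
  have "(\<Prod>j<k. if (y @ [b]) ! j then 1/3 else 2/3) = (\<Prod>j<k. if y ! j then 1/3 else (2/3::real))"
    by (rule prod.cong) (auto simp: nth_append y)
  thus ?thesis unfolding ber_prod_def by (simp add: y nth_append)
qed

lemma bp_nonneg: "ber_prod k y \<ge> 0"
  unfolding ber_prod_def by (rule prod_nonneg) auto

lemma ld_nonneg: "lin_dist k m L y \<ge> 0"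
  unfolding lin_dist_def by simp

lemma sum_ld: "(\<Sum>y\<in>cube k. lin_dist k m L y) = 1"
proof (induction k)
  case 0
  have "cube 0 = {[]}" by (auto simp: cube_def)
  thus ?case by (simp add: lin_dist_def card_cube)
next
  case (Suc k)
  have "(\<Sum>y\<in>cube (Suc k). lin_dist (Suc k) m L y) = (\<Sum>y\<in>cube k. lin_dist k m L y)"
    unfolding sum_cube_Suc by (rule sum.cong) (auto simp: cube_def ld_split)
  thus ?case using Suc by simp
qed

lemma sum_bp: "(\<Sum>y\<in>cube k. ber_prod k y) = 1"
proof (induction k)
  case 0
  have "cube 0 = {[]}" by (auto simp: cube_def)
  thus ?case by (simp add: ber_prod_def)
next
  case (Suc k)
  have "(\<Sum>y\<in>cube (Suc k). ber_prod (Suc k) y) = (\<Sum>y\<in>cube k. ber_prod k y)"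
    unfolding sum_cube_Suc by (rule sum.cong) (auto simp: cube_def bp_snoc algebra_simps)
  thus ?case using Suc by simp
qed

lemma phi_bound:
  assumes "\<forall>j<n. deg_le1_F2 m (L j)"
  shows "k \<le> n \<Longrightarrow> (\<Sum>y\<in>cube k. sqrt (lin_dist k m L y * ber_prod k y)) \<le> rr ^ k"
proof (induction k)
  case 0
  have "cube 0 = {[]}" by (auto simp: cube_def)
  thus ?case by (simp add: lin_dist_def card_cube ber_prod_def)
next
  case (Suc k)
  have step: "sqrt (lin_dist (Suc k) m L (y @ [True]) * ber_prod (Suc k) (y @ [True]))
      + sqrt (lin_dist (Suc k) m L (y @ [False]) * ber_prod (Suc k) (y @ [False]))
      \<le> rr * sqrt (lin_dist k m L y * ber_prod k y)" if y: "y \<in> cube k" for y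
  proof -
    have ly: "length y = k" using y by (simp add: cube_def)
    let ?S = "{x\<in>cube m. map (\<lambda>j. L j x) [0..<k] = y}"
    have b: "card {x\<in>?S. L k x} = 0 \<or> card {x\<in>?S. \<not> L k x} = 0 \<or> card {x\<in>?S. L k x} = card {x\<in>?S. \<not> L k x}"
      using balanced[OF assms, where k=k and y=y] Suc.prems by simp
    have e1: "{x\<in>?S. L k x} = {x\<in>cube m. map (\<lambda>j. L j x) [0..<k] = y \<and> L k x = True}" by auto
    have e2: "{x\<in>?S. \<not> L k x} = {x\<in>cube m. map (\<lambda>j. L j x) [0..<k] = y \<and> L k x = False}" by auto
    define a where "a = lin_dist (Suc k) m L (y @ [True])"
    define c where "c = lin_dist (Suc k) m L (y @ [False])"
    have abc: "a = 0 \<or> c = 0 \<or> a = c"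
      using b unfolding a_def c_def ld_snoc[OF ly] e1 e2 by auto
    have sum: "lin_dist k m L y = a + c" using ld_split[OF ly, of m L] unfolding a_def c_def by simp
    have "sqrt (a * (ber_prod k y * (1/3))) + sqrt (c * (ber_prod k y * (2/3))) \<le> rr * sqrt ((a + c) * ber_prod k y)"
      by (rule loc) (use abc bp_nonneg ld_nonneg in \<open>auto simp: a_def c_def\<close>)
    thus ?thesis unfolding sum a_def c_def bp_snoc[OF ly] by simp
  qed
  have "(\<Sum>y\<in>cube (Suc k). sqrt (lin_dist (Suc k) m L y * ber_prod (Suc k) y))
     \<le> (\<Sum>y\<in>cube k. rr * sqrt (lin_dist k m L y * ber_prod k y))"
    unfolding sum_cube_Suc by (rule sum_mono) (rule step)
  also have "\<dots> = rr * (\<Sum>y\<in>cube k. sqrt (lin_dist k m L y * ber_prod k y))"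
    by (simp add: sum_distrib_left)
  also have "\<dots> \<le> rr * rr ^ k"
    by (rule mult_left_mono) (use Suc in \<open>auto simp: rr_def\<close>)
  finally show ?case by simp
qed

lemma min_le_sqrt: fixes p q :: real assumes "p \<ge> 0" "q \<ge> 0" shows "min p q \<le> sqrt (p * q)"
proof (cases "p \<le> q")
  case True
  have "min p q = sqrt (p * p)" using True assms by simp
  also have "\<dots> \<le> sqrt (p * q)" using True assms by (intro real_sqrt_le_mono mult_left_mono) auto
  finally show ?thesis .
next
  case False
  have "min p q = sqrt (q * q)" using False assms by simp
  also have "\<dots> \<le> sqrt (p * q)" using False assms by (intro real_sqrt_le_mono mult_right_mono) auto
  finally show ?thesis .
qed

lemma rr_pos: "rr > 0" by (simp add: rr_def add_pos_pos)

lemma rr_sq: "rr ^ 2 \<le> 243 / 250"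
proof -
  have "rr ^ 2 = (sqrt (1/6))^2 + (sqrt (1/3))^2 + 2 * (sqrt (1/6) * sqrt (1/3))"
    unfolding rr_def power2_sum by (simp only: mult.assoc)
  also have "sqrt (1/6) * sqrt (1/3) = sqrt (1/6 * (1/3))" by (simp only: real_sqrt_mult)
  finally have "rr ^ 2 = 1/6 + 1/3 + 2 * sqrt (1/6 * (1/3))" by simp
  also have "sqrt (1/6 * (1/3)) \<le> (236/1000::real)"
    by (rule real_le_lsqrt) (auto simp: power2_eq_square)
  hence "1/6 + 1/3 + 2 * sqrt (1/6 * (1/3)) \<le> (243 / 250::real)" by simp
  finally show ?thesis .
qed

lemma rr_le: "rr \<le> 2 powr (- 1/100)"
proof -
  have a: "rr ^ 100 = (rr ^ 2) ^ 50" by (simp only: power_mult[symmetric]) simp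
  have b: "(243/250) ^ 50 \<le> (1/2::real)" by (simp add: power_divide)
  have p: "(rr ^ 2) ^ 50 \<le> (243/250::real) ^ 50"
    by (rule power_mono[OF rr_sq]) (rule zero_le_power2)
  have h: "rr ^ 100 \<le> 1/2" unfolding a using order.trans[OF p b] .
  have c: "(rr ^ 100) powr (1/100) = rr"
  proof -
    have "(rr ^ 100) powr (1/100) = (rr powr (real 100)) powr (1/100)"
      by (subst powr_realpow[OF rr_pos]) (rule refl)
    also have "\<dots> = rr powr (real 100 * (1/100))" by (rule powr_powr)
    also have "\<dots> = rr" using rr_pos by simp
    finally show ?thesis .
  qed
  have d: "(1/2) powr (1/100) = 2 powr (- 1/100::real)"
    by (simp add: powr_divide powr_minus_divide)
  have e: "(rr ^ 100) powr (1/100) \<le> (1/2) powr (1/100)"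
    by (rule powr_mono2[OF _ _ h]) (simp_all add: less_imp_le[OF rr_pos])
  show ?thesis using e unfolding c d .
qed

lemma tvl: fixes P Q :: "'a \<Rightarrow> real" assumes "finite A" "sum P A = 1" "sum Q A = 1"
  shows "(1/2) * (\<Sum>y\<in>A. \<bar>P y - Q y\<bar>) = 1 - (\<Sum>y\<in>A. min (P y) (Q y))"
proof -
  have abs_eq: "\<bar>P y - Q y\<bar> = P y + Q y - 2 * min (P y) (Q y)" for y
    by (simp add: min_def)
  have "(\<Sum>y\<in>A. \<bar>P y - Q y\<bar>) = sum P A + sum Q A - 2 * (\<Sum>y\<in>A. min (P y) (Q y))"
    unfolding abs_eq by (simp add: sum.distrib sum_subtractf sum_distrib_left)
  thus ?thesis using assms by simp
qed

theorem theorem7p1: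
  shows "\<exists>c::real. c > 0 \<and> (\<exists>N::nat. \<forall>n\<ge>N. \<forall>(m::nat) (L::nat \<Rightarrow> bool list \<Rightarrow> bool).
           (\<forall>j<n. deg_le1_F2 m (L j)) \<longrightarrow>
           tv_dist n (lin_dist n m L) (ber_prod n) \<ge> 1 - 2 powr (- c * real n))"
proof -
  have main: "tv_dist n (lin_dist n m L) (ber_prod n) \<ge> 1 - 2 powr (- (1/100) * real n)"
    if hL: "\<forall>j<n. deg_le1_F2 m (L j)" for n m :: nat and L :: "nat \<Rightarrow> bool list \<Rightarrow> bool"
  proof -
    let ?P = "lin_dist n m L" and ?Q = "ber_prod n"
    have tv: "tv_dist n ?P ?Q = 1 - (\<Sum>y\<in>cube n. min (?P y) (?Q y))"
      unfolding tv_dist_def by (rule tvl[OF cube_finite sum_ld sum_bp])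
    have "(\<Sum>y\<in>cube n. min (?P y) (?Q y)) \<le> (\<Sum>y\<in>cube n. sqrt (?P y * ?Q y))"
      by (rule sum_mono) (rule min_le_sqrt[OF ld_nonneg bp_nonneg])
    also have "\<dots> \<le> rr ^ n" by (rule phi_bound[OF hL]) simp
    also have "\<dots> \<le> (2 powr (- 1/100)) ^ n"
      by (rule power_mono[OF rr_le]) (rule less_imp_le[OF rr_pos])
    also have "\<dots> = (2 powr (- 1/100)) powr (real n)"
      by (rule powr_realpow[symmetric]) simp
    also have "\<dots> = 2 powr (- (1/100) * real n)"
      by (simp add: powr_powr)
    finally have "(\<Sum>y\<in>cube n. min (?P y) (?Q y)) \<le> 2 powr (- (1/100) * real n)" .
    thus ?thesis unfolding tv by linarith
  qed
  show ?thesis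
    by (rule exI[of _ "1/100"], rule conjI, simp, rule exI[of _ 0], use main in blast)
qed

end
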